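(* Let $a_c\in(\pi,\frac32\pi)$ denote the smallest strictly positive solution of $\tanh(x)=\tan(x)$ and let $\alpha_{\mathrm{crit}}:=\frac{1}{a_c\sqrt2}$. Then for every $\alpha\ge\alpha_{\mathrm{crit}}$ the rate of change function satisfies $\mathit{rc}_\alpha'(x)>0$ for all $x\in(0,1)$.
   Context: For $\alpha>0$ let $\varepsilon_\alpha=\frac{1}{4\alpha^2}$. The constant $u\equiv\alpha$ solves the Helfrich Dirichlet problem $\frac{1}{u\sqrt{1+u'^2}}\frac{d}{dx}\bigl(\frac{u}{\sqrt{1+u'^2}}H'\bigr)+\frac12 H\bigl(\frac{u''}{(1+u'^2)^{3/2}}+\frac{1}{u\sqrt{1+u'^2}}\bigr)^2-2\varepsilon H=0$ in $(-1,1)$, $u(\pm1)=\alpha$, $u'(\pm1)=0$ (with $H=\frac12(\frac{1}{u\sqrt{1+u'^2}}-\frac{u''}{(1+u'^2)^{3/2}})$) for $\varepsilon=\varepsilon_\alpha$, and there is a smooth family $(u_\varepsilon)$ of solutions for $\varepsilon$ near $\varepsilon_\alpha$ with $u_{\varepsilon_\alpha}\equiv\alpha$. The rate of change function is $\mathit{rc}_\alpha:=\frac{\partial u_\varepsilon}{\partial\varepsilon}\big|_{\varepsilon=\varepsilon_\alpha}$; equivalently, $\mathit{rc}_\alpha$ is the unique solution of $\mathit{rc}_\alpha^{(iv)}+\frac{1}{\alpha^4}\mathit{rc}_\alpha=-\frac{2}{\alpha}$ in $(-1,1)$, $\mathit{rc}_\alpha(\pm1)=\mathit{rc}_\alpha'(\pm1)=0$.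 *)

theory Defs
  imports "HOL-Analysis.Analysis"
begin

definition a_c :: real where
  "a_c = (THE x. 0 < x \<and> tanh x = tan x \<and> (\<forall>y. 0 < y \<and> y < x \<longrightarrow> tanh y \<noteq> tan y))"

definition alpha_crit :: real where
  "alpha_crit = 1 / (a_c * sqrt 2)"

text \<open>f solves the boundary value problem characterising the rate of change
  function rc_alpha:  f'''' + f / alpha^4 = -2/alpha on (-1,1),
  f(-1) = f(1) = 0, f'(-1) = f'(1) = 0 (one-sided derivatives on [-1,1]),
  with f four times differentiable on (-1,1).\<close>
definition is_rc :: "real \<Rightarrow> (real \<Rightarrow> real) \<Rightarrow> bool" where
  "is_rc \<alpha> f \<longleftrightarrow>
     (\<forall>k<4. \<forall>x\<in>{-1<..<1}. ((deriv ^^ k) f has_real_derivative (deriv ^^ Suc k) f x) (at x)) \<and>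
     (\<forall>x\<in>{-1<..<1}. (deriv ^^ 4) f x + f x / \<alpha> ^ 4 = - 2 / \<alpha>) \<and>
     f (-1) = 0 \<and> f 1 = 0 \<and>
     (f has_real_derivative 0) (at (-1) within {-1..1}) \<and>
     (f has_real_derivative 0) (at 1 within {-1..1})"

end

theory Submission
  imports Defs
begin

lemma W_pos: fixes t :: real assumes "0 < t" shows "sinh t * cosh t - sin t * cos t > 0"
proof -
  have "(\<lambda>t. sinh t * cosh t - sin t * cos t) 0 < (\<lambda>t. sinh t * cosh t - sin t * cos t) t"
  proof (rule DERIV_pos_imp_increasing_open[OF assms])
    fix x :: real assume x: "0 < x" "x < t"
    have d: "((\<lambda>t. sinh t * cosh t - sin t * cos t) has_real_derivative 2 * (sinh x)^2 + 2 * (sin x)^2) (at x)"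
      apply (rule derivative_eq_intros refl)+
      using hyperbolic_pythagoras[of x] sin_cos_squared_add[of x]
      by (simp add: power2_eq_square algebra_simps)
    have "sinh x > 0" using x by simp
    then show "\<exists>y. ((\<lambda>t. sinh t * cosh t - sin t * cos t) has_real_derivative y) (at x) \<and> 0 < y"
      using d by (intro exI[of _ "2 * (sinh x)^2 + 2 * (sin x)^2"]) (auto intro: add_pos_nonneg)
  next
    show "continuous_on {0..t} (\<lambda>t. sinh t * cosh t - sin t * cos t)"
      by (intro continuous_intros)
  qed
  then show ?thesis by simp
qed

lemma rho_mono:
  fixes t K :: real
  assumes "0 < t" "t < K" "\<forall>x\<in>{t..K}. cos x \<noteq> 0"
  shows "cosh t * sin t / (sinh t * cos t) < cosh K * sin K / (sinh K * cos K)"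
proof (rule DERIV_pos_imp_increasing_open[OF assms(2), where f = "\<lambda>x. cosh x * sin x / (sinh x * cos x)"])
  fix x :: real assume x: "t < x" "x < K"
  have c: "cos x \<noteq> 0" using assms x by auto
  have s: "sinh x > 0" using x assms by simp
  have d: "((\<lambda>x. cosh x * sin x / (sinh x * cos x)) has_real_derivative
      (sinh x * cosh x - sin x * cos x) / (sinh x * cos x)^2) (at x)"
    apply (rule derivative_eq_intros refl)+
    using c s apply simp
    using c s apply (simp add: divide_simps power2_eq_square)
    using hyperbolic_pythagoras[of x] sin_cos_squared_add[of x] unfolding power2_eq_square
    by algebra
  have "(sinh x * cosh x - sin x * cos x) / (sinh x * cos x)^2 > 0"
    using W_pos[of x] x assms c s by (intro divide_pos_pos) auto
  then show "\<exists>y. ((\<lambda>x. cosh x * sin x / (sinh x * cos x)) has_real_derivative y) (at x) \<and> 0 < y"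
    using d by blast
next
  have "\<forall>x\<in>{t..K}. sinh x * cos x \<noteq> 0" using assms by auto
  then show "continuous_on {t..K} (\<lambda>x. cosh x * sin x / (sinh x * cos x))"
    by (intro continuous_intros) auto
qed

lemma vu_pos: fixes t :: real assumes "0 < t" "t \<le> pi" shows "cosh t * sin t - sinh t * cos t > 0"
proof -
  have "(\<lambda>t. cosh t * sin t - sinh t * cos t) 0 < (\<lambda>t. cosh t * sin t - sinh t * cos t) t"
  proof (rule DERIV_pos_imp_increasing_open[OF assms(1)])
    fix x :: real assume x: "0 < x" "x < t"
    have d: "((\<lambda>t. cosh t * sin t - sinh t * cos t) has_real_derivative 2 * sinh x * sin x) (at x)"
      apply (rule derivative_eq_intros refl)+
      by (simp add: algebra_simps)
    have "sinh x > 0" using x by simp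
    moreover have "sin x > 0" using x assms by (intro sin_gt_zero) auto
    ultimately show "\<exists>y. ((\<lambda>t. cosh t * sin t - sinh t * cos t) has_real_derivative y) (at x) \<and> 0 < y"
      using d by (intro exI[of _ "2 * sinh x * sin x"]) auto
  next
    show "continuous_on {0..t} (\<lambda>t. cosh t * sin t - sinh t * cos t)"
      by (intro continuous_intros)
  qed
  then show ?thesis by simp
qed

lemma tan_eq_iff:
  fixes y :: real assumes "cos y \<noteq> 0"
  shows "tanh y = tan y \<longleftrightarrow> cosh y * sin y - sinh y * cos y = 0"
proof -
  have "cosh y > 0" by simp
  then show ?thesis using assms by (auto simp: tanh_def tan_def field_simps)
qed

lemma no_sol_small:
  fixes y :: real assumes "0 < y" "y \<le> pi" shows "tanh y \<noteq> tan y"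
proof (cases "cos y = 0")
  case True
  then have "tan y = 0" by (simp add: tan_def)
  moreover have "tanh y > 0" using assms by simp
  ultimately show ?thesis by simp
next
  case False
  then show ?thesis using tan_eq_iff[OF False] vu_pos[OF assms] by simp
qed

lemma cos_neg_range: fixes y :: real assumes "pi < y" "y \<le> 5*pi/4" shows "cos y < 0"
  using assms by (intro cos_lt_zero_pi) auto

lemma a_c_props:
  "pi < a_c \<and> a_c \<le> 5*pi/4 \<and> tanh a_c = tan a_c \<and> (\<forall>y. 0 < y \<and> y < a_c \<longrightarrow> tanh y \<noteq> tan y)"
proof -
  define g where "g = (\<lambda>x::real. cosh x * sin x - sinh x * cos x)"
  have contg: "continuous_on S g" for S unfolding g_def by (intro continuous_intros)
  define Z where "Z = {x\<in>{pi..5*pi/4}. g x = 0}"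
  have clZ: "closed Z" unfolding Z_def by (rule continuous_closed_preimage_constant[OF contg]) auto
  have gpi: "g pi = sinh pi" by (simp add: g_def)
  have gpi_pos: "g pi > 0" using gpi by simp
  have "g (5*pi/4) = cosh (pi/4 + pi) * sin (pi/4 + pi) - sinh (pi/4 + pi) * cos (pi/4 + pi)"
    by (simp add: g_def)
  also have "\<dots> = (sqrt 2 / 2) * (sinh (5*pi/4) - cosh (5*pi/4))"
    by (simp only: sin_periodic_pi cos_periodic_pi sin_45 cos_45) (simp add: field_simps)
  finally have g54e: "g (5*pi/4) = (sqrt 2 / 2) * (sinh (5*pi/4) - cosh (5*pi/4))" .
  have g54: "g (5*pi/4) < 0" unfolding g54e
    using sinh_less_cosh_real[of "5*pi/4"] by (intro mult_pos_neg) auto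
  have "\<exists>x\<ge>pi. x \<le> 5*pi/4 \<and> (\<lambda>x. - g x) x = 0"
    by (rule IVT') (use gpi_pos g54 in \<open>auto intro: continuous_intros contg\<close>)
  then have Zne: "Z \<noteq> {}" unfolding Z_def by auto
  have bdd: "bdd_below Z" unfolding Z_def by (rule bdd_belowI[of _ pi]) auto
  define m where "m = Inf Z"
  have mZ: "m \<in> Z" unfolding m_def by (rule closed_contains_Inf[OF Zne bdd clZ])
  have m_low: "\<And>y. y \<in> Z \<Longrightarrow> m \<le> y" unfolding m_def by (rule cInf_lower[OF _ bdd])
  have m1: "pi < m" "m \<le> 5*pi/4" "g m = 0" using mZ gpi_pos unfolding Z_def
    by (auto simp: order.order_iff_strict)
  have Pm: "tanh m = tan m" using tan_eq_iff[of m] cos_neg_range[OF m1(1,2)] m1(3) g_def by simp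
  have Pm2: "\<forall>y. 0 < y \<and> y < m \<longrightarrow> tanh y \<noteq> tan y"
  proof (intro allI impI)
    fix y :: real assume y: "0 < y \<and> y < m"
    show "tanh y \<noteq> tan y"
    proof (cases "y \<le> pi")
      case True then show ?thesis using no_sol_small y by auto
    next
      case False
      then have c: "cos y < 0" using y m1 by (intro cos_neg_range) auto
      show ?thesis
      proof
        assume "tanh y = tan y"
        then have "g y = 0" using tan_eq_iff[of y] c g_def by simp
        then have "y \<in> Z" using False y m1 unfolding Z_def by auto
        then show False using m_low y by fastforce
      qed
    qed
  qed
  have "a_c = m" unfolding a_c_def
  proof (rule the_equality)
    show "0 < m \<and> tanh m = tan m \<and> (\<forall>y. 0 < y \<and> y < m \<longrightarrow> tanh y \<noteq> tan y)"
      using m1 Pm Pm2 pi_gt_zero by (meson less_trans)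
  next
    fix x :: real assume x: "0 < x \<and> tanh x = tan x \<and> (\<forall>y. 0 < y \<and> y < x \<longrightarrow> tanh y \<noteq> tan y)"
    show "x = m"
    proof (rule ccontr)
      assume "x \<noteq> m"
      then have "x < m \<or> m < x" by auto
      then show False
        using x Pm Pm2 m1 pi_gt_zero by (metis less_trans)
    qed
  qed
  then show ?thesis using m1 Pm Pm2 by simp
qed

lemma vK_ge_uK:
  fixes K :: real assumes "pi/2 < K" "K \<le> a_c"
  shows "cosh K * sin K - sinh K * cos K \<ge> 0"
proof (cases "K \<le> pi")
  case True then show ?thesis using vu_pos[of K] assms pi_gt_zero by linarith
next
  case False
  define g where "g = (\<lambda>x::real. cosh x * sin x - sinh x * cos x)"
  have ac: "pi < a_c" "a_c \<le> 5*pi/4" "tanh a_c = tan a_c" "\<forall>y. 0 < y \<and> y < a_c \<longrightarrow> tanh y \<noteq> tan y"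
    using a_c_props by auto
  show ?thesis
  proof (rule ccontr)
    assume neg: "\<not> ?thesis"
    then have gK: "g K < 0" by (simp add: g_def)
    have "K \<noteq> a_c" using ac(1,2,3) tan_eq_iff[of a_c] cos_neg_range[of a_c] neg by auto
    then have Klt: "K < a_c" using assms by simp
    have gpi: "g pi > 0" by (simp add: g_def)
    have "\<exists>x\<ge>pi. x \<le> K \<and> (\<lambda>x. - g x) x = 0"
      by (rule IVT') (use gpi gK False in \<open>auto simp: g_def intro!: continuous_intros\<close>)
    then obtain y where y: "pi \<le> y" "y \<le> K" "g y = 0" by auto
    have "y \<noteq> pi" "y \<noteq> K" using y gpi gK by auto
    then have y2: "pi < y" "y < a_c" using y Klt by auto
    then have "cos y < 0" using ac by (intro cos_neg_range) auto
    then have "tanh y = tan y" using tan_eq_iff[of y] y(3) g_def by simp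
    then show False using ac(4) y2 pi_gt_zero by force
  qed
qed

lemma main_sign:
  fixes t K :: real assumes "0 < t" "t < K" "K \<le> a_c"
  shows "cosh K * sin K * (sinh t * cos t) - sinh K * cos K * (cosh t * sin t) > 0"
proof -
  have ac: "pi < a_c" "a_c \<le> 5*pi/4" using a_c_props by auto
  have sht: "sinh t > 0" "sinh K > 0" using assms by auto
  have cht: "cosh t > 0" "cosh K > 0" by auto
  consider "K < pi/2" | "K = pi/2" | "t < pi/2" "pi/2 < K" | "t = pi/2" | "pi/2 < t" by linarith
  then show ?thesis
  proof cases
    case 1
    have ct: "cos t > 0" "cos K > 0" using 1 assms by (auto intro!: cos_gt_zero_pi)
    have "cosh t * sin t / (sinh t * cos t) < cosh K * sin K / (sinh K * cos K)"
    proof (rule rho_mono)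
      show "\<forall>x\<in>{t..K}. cos x \<noteq> 0"
      proof
        fix x assume "x \<in> {t..K}"
        then have "cos x > 0" using 1 assms by (intro cos_gt_zero_pi) auto
        then show "cos x \<noteq> 0" by simp
      qed
    qed (use assms in auto)
    then show ?thesis using ct sht by (simp add: field_simps)
  next
    case 2
    have "cos t > 0" using 2 assms by (auto intro!: cos_gt_zero_pi)
    moreover have "cos K = 0" "sin K = 1" by (subst 2, simp)+
    ultimately show ?thesis using sht cht by simp
  next
    case 3
    have ct: "cos t > 0" using 3 assms by (auto intro!: cos_gt_zero_pi)
    have cK: "cos K < 0" using 3 assms ac by (intro cos_lt_zero_pi) auto
    have ut: "sinh t * cos t > 0" using ct sht by simp
    have uK: "sinh K * cos K < 0" using cK sht by (simp add: mult_pos_neg)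
    have vt: "cosh t * sin t - sinh t * cos t > 0" using vu_pos[of t] 3 assms pi_gt_zero by linarith
    have vK: "cosh K * sin K - sinh K * cos K \<ge> 0" using vK_ge_uK 3 assms by auto
    have a: "cosh K * sin K * (sinh t * cos t) \<ge> sinh K * cos K * (sinh t * cos t)"
      using vK ut by (intro mult_right_mono) auto
    have b: "sinh K * cos K * (sinh t * cos t - cosh t * sin t) > 0"
      using uK vt by (intro mult_neg_neg) auto
    show ?thesis using a b by (simp add: algebra_simps)
  next
    case 4
    have cK: "cos K < 0" using 4 assms ac by (intro cos_lt_zero_pi) auto
    have "sinh K * cos K < 0" using cK sht by (simp add: mult_pos_neg)
    moreover have "cos t = 0" "sin t = 1" by (subst 4, simp)+
    ultimately show ?thesis using cht by (simp add: mult_neg_pos)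
  next
    case 5
    have cc: "\<forall>x\<in>{t..K}. cos x < 0" using 5 assms ac by (auto intro!: cos_lt_zero_pi)
    have ct: "cos t < 0" "cos K < 0" using cc assms by auto
    have "cosh t * sin t / (sinh t * cos t) < cosh K * sin K / (sinh K * cos K)"
      by (rule rho_mono) (use assms cc in \<open>auto\<close>)
    moreover have "sinh t * cos t < 0" "sinh K * cos K < 0" using ct sht by (auto simp: mult_pos_neg)
    ultimately show ?thesis by (simp add: field_simps)
  qed
qed

lemma sq_ineq: fixes a b :: real shows "2*a*b \<le> a^2 + b^2" "-(2*a*b) \<le> a^2 + b^2"
proof -
  have 1: "0 \<le> (a-b)^2" "0 \<le> (a+b)^2" by simp_all
  then show "2*a*b \<le> a^2 + b^2" "-(2*a*b) \<le> a^2 + b^2" by (simp_all add: power2_eq_square algebra_simps)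
qed

lemma sq_ineq2: fixes a b c :: real shows
  "2*c*a*b \<le> \<bar>c\<bar>*(a^2+b^2)" "-(2*c*a*b) \<le> \<bar>c\<bar>*(a^2+b^2)"
proof -
  have 1: "0 \<le> (a-b)^2" "0 \<le> (a+b)^2" by simp_all
  have "\<bar>2*a*b\<bar> \<le> a^2+b^2" using 1 by (simp add: power2_eq_square algebra_simps abs_le_iff)
  then have "\<bar>c\<bar> * \<bar>2*a*b\<bar> \<le> \<bar>c\<bar>*(a^2+b^2)" by (simp add: mult_left_mono)
  moreover have "\<bar>2*c*a*b\<bar> = \<bar>c\<bar> * \<bar>2*a*b\<bar>" by (simp add: abs_mult)
  ultimately show "2*c*a*b \<le> \<bar>c\<bar>*(a^2+b^2)" "-(2*c*a*b) \<le> \<bar>c\<bar>*(a^2+b^2)" by linarith+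
qed

lemma bnd_aux: fixes p q r w c :: real
  shows "2*p*q + 2*q*r + 2*r*w + 2*c*w*p \<le> (2+\<bar>c\<bar>)*(p^2+q^2+r^2+w^2)"
    "-(2*p*q + 2*q*r + 2*r*w + 2*c*w*p) \<le> (2+\<bar>c\<bar>)*(p^2+q^2+r^2+w^2)"
proof -
  have e: "(2+\<bar>c\<bar>)*(p^2+q^2+r^2+w^2) = 2*p^2+2*q^2+2*r^2+2*w^2 + (\<bar>c\<bar>*w^2 + \<bar>c\<bar>*p^2) + \<bar>c\<bar>*q^2 + \<bar>c\<bar>*r^2"
    by (simp add: algebra_simps)
  have n: "\<bar>c\<bar>*q^2 \<ge> 0" "\<bar>c\<bar>*r^2 \<ge> 0" "p^2 \<ge> 0" "q^2\<ge>0" "r^2\<ge>0" "w^2\<ge>0" by simp_all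
  have f: "2*c*w*p \<le> \<bar>c\<bar>*w^2 + \<bar>c\<bar>*p^2" "-(2*c*w*p) \<le> \<bar>c\<bar>*w^2 + \<bar>c\<bar>*p^2"
    using sq_ineq2[of c w p] by (simp_all add: algebra_simps)
  show "2*p*q + 2*q*r + 2*r*w + 2*c*w*p \<le> (2+\<bar>c\<bar>)*(p^2+q^2+r^2+w^2)"
    "-(2*p*q + 2*q*r + 2*r*w + 2*c*w*p) \<le> (2+\<bar>c\<bar>)*(p^2+q^2+r^2+w^2)"
    unfolding e using n f sq_ineq[of p q] sq_ineq[of q r] sq_ineq[of r w] by linarith+
qed

lemma ode_unique:
  fixes h0 h1 h2 h3 :: "real \<Rightarrow> real" and c a b xz :: real
  assumes d0: "\<forall>x\<in>{a<..<b}. (h0 has_real_derivative h1 x) (at x)"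
    and d1: "\<forall>x\<in>{a<..<b}. (h1 has_real_derivative h2 x) (at x)"
    and d2: "\<forall>x\<in>{a<..<b}. (h2 has_real_derivative h3 x) (at x)"
    and d3: "\<forall>x\<in>{a<..<b}. (h3 has_real_derivative c * h0 x) (at x)"
    and xz: "xz \<in> {a<..<b}"
    and z: "h0 xz = 0" "h1 xz = 0" "h2 xz = 0" "h3 xz = 0"
  shows "\<forall>x\<in>{a<..<b}. h0 x = 0 \<and> h1 x = 0 \<and> h2 x = 0 \<and> h3 x = 0"
proof
  fix x assume x: "x \<in> {a<..<b}"
  define E where "E = (\<lambda>y. (h0 y)^2 + (h1 y)^2 + (h2 y)^2 + (h3 y)^2)"
  define E' where "E' = (\<lambda>y. 2*h0 y*h1 y + 2*h1 y*h2 y + 2*h2 y*h3 y + 2*c*h3 y*h0 y)"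
  define L where "L = 2 + \<bar>c\<bar>"
  have dE: "(E has_real_derivative E' y) (at y)" if y: "y \<in> {a<..<b}" for y
  proof -
    note e0 = d0[rule_format, OF y] and e1 = d1[rule_format, OF y]
      and e2 = d2[rule_format, OF y] and e3 = d3[rule_format, OF y]
    show ?thesis unfolding E_def E'_def
      by (rule derivative_eq_intros e0 e1 e2 e3 refl)+ (simp add: algebra_simps)
  qed
  have bnd: "E' y \<le> L * E y" "- E' y \<le> L * E y" for y
    unfolding E_def E'_def L_def using bnd_aux by blast+
  have Enn: "E y \<ge> 0" for y unfolding E_def by simp
  have E0: "E xz = 0" unfolding E_def using z by simp
  have "E x = 0"
  proof (cases "xz \<le> x")
    case True
    define P where "P = (\<lambda>y. E y * exp (- L * (y - xz)))"
    have "P x \<le> P xz"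
    proof (rule DERIV_nonpos_imp_nonincreasing[OF True])
      fix y assume y: "xz \<le> y" "y \<le> x"
      then have yi: "y \<in> {a<..<b}" using x xz by auto
      have "(P has_real_derivative E' y * exp (- L * (y - xz)) + E y * (exp (- L * (y - xz)) * (- L))) (at y)"
        unfolding P_def by (rule derivative_eq_intros dE[OF yi] refl)+ simp
      moreover have "E' y * exp (- L * (y - xz)) + E y * (exp (- L * (y - xz)) * (- L)) = (E' y - L * E y) * exp (- L * (y - xz))"
        by (simp add: algebra_simps)
      moreover have "(E' y - L * E y) * exp (- L * (y - xz)) \<le> 0"
        using bnd(1)[of y] by (intro mult_nonpos_nonneg) auto
      ultimately show "\<exists>D. (P has_real_derivative D) (at y) \<and> D \<le> 0" by metis
    qed
    then have "E x * exp (- L * (x - xz)) \<le> 0" using E0 unfolding P_def by simp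
    then have "E x \<le> 0" by (simp add: mult_le_0_iff)
    then show ?thesis using Enn[of x] by simp
  next
    case False
    then have le: "x \<le> xz" by simp
    define P where "P = (\<lambda>y. E y * exp (L * (y - xz)))"
    have "P x \<le> P xz"
    proof (rule DERIV_nonneg_imp_nondecreasing[OF le])
      fix y assume y: "x \<le> y" "y \<le> xz"
      then have yi: "y \<in> {a<..<b}" using x xz by auto
      have "(P has_real_derivative E' y * exp (L * (y - xz)) + E y * (exp (L * (y - xz)) * L)) (at y)"
        unfolding P_def by (rule derivative_eq_intros dE[OF yi] refl)+ simp
      moreover have "E' y * exp (L * (y - xz)) + E y * (exp (L * (y - xz)) * L) = (E' y + L * E y) * exp (L * (y - xz))"
        by (simp add: algebra_simps)
      moreover have "(E' y + L * E y) * exp (L * (y - xz)) \<ge> 0"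
        using bnd(2)[of y] by (intro mult_nonneg_nonneg) auto
      ultimately show "\<exists>D. (P has_real_derivative D) (at y) \<and> D \<ge> 0" by metis
    qed
    then have "E x * exp (L * (x - xz)) \<le> 0" using E0 unfolding P_def by simp
    then have "E x \<le> 0" by (simp add: mult_le_0_iff)
    then show ?thesis using Enn[of x] by simp
  qed
  then show "h0 x = 0 \<and> h1 x = 0 \<and> h2 x = 0 \<and> h3 x = 0"
    unfolding E_def by (simp add: add_nonneg_eq_0_iff)
qed

fun Lq :: "real \<Rightarrow> real \<times> real \<times> real \<times> real \<Rightarrow> real \<Rightarrow> real" where
  "Lq k (a1, a2, a3, a4) x = a1 * (cosh (k*x) * cos (k*x)) + a2 * (sinh (k*x) * sin (k*x))
     + a3 * (sinh (k*x) * cos (k*x)) + a4 * (cosh (k*x) * sin (k*x))"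

fun dq :: "real \<Rightarrow> real \<times> real \<times> real \<times> real \<Rightarrow> real \<times> real \<times> real \<times> real" where
  "dq k (a1, a2, a3, a4) = (k*(a3+a4), k*(a4-a3), k*(a1+a2), k*(a2-a1))"

lemma Lq_deriv: "(Lq k a has_real_derivative Lq k (dq k a) x) (at x)"
proof -
  obtain a1 a2 a3 a4 where a: "a = (a1, a2, a3, a4)" by (cases a) auto
  show ?thesis unfolding a Lq.simps dq.simps
    by (rule derivative_eq_intros refl)+ (simp add: algebra_simps)
qed

lemma Lq_dq4: "Lq k (dq k (dq k (dq k (dq k a)))) x = - 4 * k^4 * Lq k a x"
proof -
  obtain a1 a2 a3 a4 where a: "a = (a1, a2, a3, a4)" by (cases a) auto
  show ?thesis unfolding a by (simp add: algebra_simps power4_eq_xxxx)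
qed

lemma Lq_0: "Lq k a 0 = fst a"
  by (cases a) auto

lemma S_pos: fixes t :: real assumes "0 < t" shows "sinh t * cosh t + sin t * cos t > 0"
proof -
  have "(\<lambda>t. sinh t * cosh t + sin t * cos t) 0 < (\<lambda>t. sinh t * cosh t + sin t * cos t) t"
  proof (rule DERIV_pos_imp_increasing_open[OF assms])
    fix x :: real assume x: "0 < x" "x < t"
    have d: "((\<lambda>t. sinh t * cosh t + sin t * cos t) has_real_derivative 2 * (sinh x)^2 + 2 * (cos x)^2) (at x)"
      apply (rule derivative_eq_intros refl)+
      using hyperbolic_pythagoras[of x] sin_cos_squared_add[of x] unfolding power2_eq_square
      by algebra
    have "sinh x > 0" using x by simp
    then show "\<exists>y. ((\<lambda>t. sinh t * cosh t + sin t * cos t) has_real_derivative y) (at x) \<and> 0 < y"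
      using d by (intro exI[of _ "2 * (sinh x)^2 + 2 * (cos x)^2"]) (auto intro: add_pos_nonneg)
  next
    show "continuous_on {0..t} (\<lambda>t. sinh t * cosh t + sin t * cos t)"
      by (intro continuous_intros)
  qed
  then show ?thesis by simp
qed

lemma bc_generic:
  fixes f q :: "real \<Rightarrow> real"
  assumes "(f has_real_derivative 0) (at x within S)"
    and ev: "eventually (\<lambda>y. f y = q y) (at x within S)"
    and dq: "(q has_real_derivative d) (at x)"
    and nb: "at x within S \<noteq> bot"
  shows "f x = q x" "d = 0"
proof -
  have "(f \<longlongrightarrow> f x) (at x within S)"
    using DERIV_continuous[OF assms(1)] by (simp add: continuous_within)
  then have "(q \<longlongrightarrow> f x) (at x within S)" using Lim_transform_eventually[OF _ ev] by blast
  moreover have "(q \<longlongrightarrow> q x) (at x within S)"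
    using tendsto_within_subset[OF isContD[OF DERIV_isCont[OF dq]], of S] by simp
  ultimately show fq: "f x = q x" using tendsto_unique[OF nb] by blast
  have "(q has_real_derivative 0) (at x within S)"
    using assms(1) has_field_derivative_cong_eventually[OF ev fq] by simp
  moreover have "(q has_real_derivative d) (at x within S)"
    using dq by (rule has_field_derivative_at_within)
  ultimately show "d = 0" using has_field_derivative_unique[OF _ _ nb] by blast
qed

theorem theorem4p3:
  fixes \<alpha> :: real and f :: "real \<Rightarrow> real"
  assumes "\<alpha> \<ge> alpha_crit"
    and "is_rc \<alpha> f"
  shows "\<forall>x\<in>{0<..<1}. deriv f x > 0"
proof -
  have ac: "pi < a_c" "a_c \<le> 5*pi/4" using a_c_props by auto
  have acpos: "a_c > 0" using ac pi_gt_zero by linarith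
  have acrit_pos: "alpha_crit > 0" unfolding alpha_crit_def using acpos by simp
  have apos: "\<alpha> > 0" using assms(1) acrit_pos by linarith
  define k where "k = 1 / (\<alpha> * sqrt 2)"
  have kpos: "k > 0" unfolding k_def using apos by simp
  have "k \<le> 1 / (alpha_crit * sqrt 2)" unfolding k_def
    using assms(1) acrit_pos by (intro divide_left_mono mult_right_mono mult_pos_pos) auto
  also have "1 / (alpha_crit * sqrt 2) = a_c" unfolding alpha_crit_def using acpos by simp
  finally have kle: "k \<le> a_c" .
  have s4: "(sqrt 2 :: real)^4 = 4"
    by (metis num_double numeral_times_numeral power2_eq_square power_mult real_sqrt_pow2 zero_le_numeral
        numeral_Bit0 power4_eq_xxxx)
  have k4: "4 * k^4 = 1 / \<alpha>^4" unfolding k_def using apos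
    by (simp add: power_mult_distrib power_divide s4)
  note rc = assms(2)[unfolded is_rc_def]
  define f1 where "f1 = deriv f"
  define f2 where "f2 = deriv f1"
  define f3 where "f3 = deriv f2"
  define f4 where "f4 = deriv f3"
  have fp: "(deriv^^0) f = f" "(deriv^^1) f = f1" "(deriv^^2) f = f2" "(deriv^^3) f = f3" "(deriv^^4) f = f4"
    unfolding f1_def f2_def f3_def f4_def by (simp_all add: eval_nat_numeral)
  define I where "I = {-1<..<(1::real)}"
  have dD: "\<forall>n<4. \<forall>x\<in>I. ((deriv ^^ n) f has_real_derivative (deriv ^^ Suc n) f x) (at x)"
    using rc unfolding I_def by blast
  have d0: "\<forall>x\<in>I. (f has_real_derivative f1 x) (at x)" using dD[rule_format, of 0] fp by simp
  have d1: "\<forall>x\<in>I. (f1 has_real_derivative f2 x) (at x)" using dD[rule_format, of 1] fp by (simp add: f2_def)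
  have d2: "\<forall>x\<in>I. (f2 has_real_derivative f3 x) (at x)"
    using dD[rule_format, of 2] fp by (simp add: eval_nat_numeral f3_def f2_def f1_def)
  have d3: "\<forall>x\<in>I. (f3 has_real_derivative f4 x) (at x)"
    using dD[rule_format, of 3] fp by (simp add: eval_nat_numeral f4_def f3_def f2_def f1_def)
  have ode: "\<forall>x\<in>I. f4 x + f x / \<alpha>^4 = - 2 / \<alpha>" using rc fp unfolding I_def by simp
  define A where "A = f 0 + 2 * \<alpha>^3"
  define B where "B = f2 0 / (2 * k^2)"
  define C where "C = (f1 0 / k - f3 0 / (2 * k^3)) / 2"
  define Dd where "Dd = (f1 0 / k + f3 0 / (2 * k^3)) / 2"
  define cf where "cf = (A, B, C, Dd)"
  define h0 where "h0 = (\<lambda>x. f x + 2 * \<alpha>^3 - Lq k cf x)"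
  define h1 where "h1 = (\<lambda>x. f1 x - Lq k (dq k cf) x)"
  define h2 where "h2 = (\<lambda>x. f2 x - Lq k (dq k (dq k cf)) x)"
  define h3 where "h3 = (\<lambda>x. f3 x - Lq k (dq k (dq k (dq k cf))) x)"
  have "\<forall>x\<in>I. h0 x = 0 \<and> h1 x = 0 \<and> h2 x = 0 \<and> h3 x = 0"
    unfolding I_def
  proof (rule ode_unique[where c = "- 1 / \<alpha>^4" and xz = 0])
    show "\<forall>x\<in>{- 1<..<1}. (h0 has_real_derivative h1 x) (at x)"
    proof
      fix x :: real assume "x \<in> {-1<..<1}"
      then have "(f has_real_derivative f1 x) (at x)" using d0 I_def by blast
      from DERIV_diff[OF DERIV_add[OF this DERIV_const] Lq_deriv]
      show "(h0 has_real_derivative h1 x) (at x)" unfolding h0_def h1_def by simp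
    qed
    show "\<forall>x\<in>{- 1<..<1}. (h1 has_real_derivative h2 x) (at x)"
    proof
      fix x :: real assume "x \<in> {-1<..<1}"
      then have "(f1 has_real_derivative f2 x) (at x)" using d1 I_def by blast
      from DERIV_diff[OF this Lq_deriv]
      show "(h1 has_real_derivative h2 x) (at x)" unfolding h1_def h2_def by simp
    qed
    show "\<forall>x\<in>{- 1<..<1}. (h2 has_real_derivative h3 x) (at x)"
    proof
      fix x :: real assume "x \<in> {-1<..<1}"
      then have "(f2 has_real_derivative f3 x) (at x)" using d2 I_def by blast
      from DERIV_diff[OF this Lq_deriv]
      show "(h2 has_real_derivative h3 x) (at x)" unfolding h2_def h3_def by simp
    qed
    show "\<forall>x\<in>{- 1<..<1}. (h3 has_real_derivative (- 1 / \<alpha>^4) * h0 x) (at x)"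
    proof
      fix x :: real assume x: "x \<in> {-1<..<1}"
      then have "(f3 has_real_derivative f4 x) (at x)" using d3 I_def by blast
      from DERIV_diff[OF this Lq_deriv]
      have "(h3 has_real_derivative f4 x - Lq k (dq k (dq k (dq k (dq k cf)))) x) (at x)"
        unfolding h3_def by simp
      moreover have "f4 x - Lq k (dq k (dq k (dq k (dq k cf)))) x = (- 1 / \<alpha>^4) * h0 x"
      proof -
        have o: "f4 x = - 2 / \<alpha> - f x / \<alpha>^4" using ode x I_def by (simp add: algebra_simps)
        have "Lq k (dq k (dq k (dq k (dq k cf)))) x = - (1 / \<alpha>^4) * Lq k cf x"
          using Lq_dq4[of k] k4 by (simp add: algebra_simps)
        then show ?thesis unfolding o h0_def using apos by (simp add: field_simps eval_nat_numeral)
      qed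
      ultimately show "(h3 has_real_derivative (- 1 / \<alpha>^4) * h0 x) (at x)" by simp
    qed
    show "(0::real) \<in> {- 1<..<1}" by simp
    show "h0 0 = 0" unfolding h0_def Lq_0 cf_def A_def by simp
    show "h1 0 = 0" unfolding h1_def Lq_0 cf_def C_def Dd_def using kpos by (simp add: field_simps)
    show "h2 0 = 0" unfolding h2_def Lq_0 cf_def B_def using kpos by (simp add: field_simps power2_eq_square)
    show "h3 0 = 0" unfolding h3_def Lq_0 cf_def C_def Dd_def using kpos
      by (simp add: field_simps power3_eq_cube)
  qed
  then have feq: "\<forall>x\<in>I. f x = Lq k cf x - 2 * \<alpha>^3" and f1eq: "\<forall>x\<in>I. f1 x = Lq k (dq k cf) x"
    unfolding h0_def h1_def by auto
  define q where "q = (\<lambda>x. Lq k cf x - 2 * \<alpha>^3)"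
  have dqq: "(q has_real_derivative Lq k (dq k cf) x) (at x)" for x
    unfolding q_def using DERIV_diff[OF Lq_deriv DERIV_const] by simp
  have evI: "eventually (\<lambda>y. f y = q y) F" if "eventually (\<lambda>y. y \<in> I) F" for F
    using that by (rule eventually_mono) (use feq q_def in auto)
  have r1: "at 1 within {-1..1} = at_left (1::real)" by (rule at_within_Icc_at_left) simp
  have r2: "at (-1) within {-1..1} = at_right (-1::real)" by (rule at_within_Icc_at_right) simp
  have e1: "eventually (\<lambda>y. f y = q y) (at_left 1)"
    by (rule evI) (use eventually_at_left_real[of "-1" "1::real"] I_def in simp)
  have e2: "eventually (\<lambda>y. f y = q y) (at_right (-1))"
    by (rule evI) (use eventually_at_right_real[of "-1" "1::real"] I_def in simp)
  have bc1: "f 1 = q 1" "Lq k (dq k cf) 1 = 0"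
    using bc_generic[of f 1 "{..<1}" q, OF _ e1 dqq trivial_limit_at_left_real] rc r1 by auto
  have bc2: "f (-1) = q (-1)" "Lq k (dq k cf) (-1) = 0"
    using bc_generic[of f "-1" "{-1<..}" q, OF _ e2 dqq trivial_limit_at_right_real] rc r2 by auto
  have fm1: "f 1 = 0" "f (-1) = 0" using rc by auto
  define e1 where "e1 = cosh k * cos k"
  define e2 where "e2 = sinh k * sin k"
  define u where "u = sinh k * cos k"
  define v where "v = cosh k * sin k"
  have E1: "A * e1 + B * e2 + C * u + Dd * v = 2 * \<alpha>^3"
    using bc1(1) fm1 unfolding q_def cf_def e1_def e2_def u_def v_def by simp
  have E2: "A * e1 + B * e2 - C * u - Dd * v = 2 * \<alpha>^3"
    using bc2(1) fm1 unfolding q_def cf_def e1_def e2_def u_def v_def by simp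
  have "k * ((C + Dd) * e1 + (Dd - C) * e2 + (A + B) * u + (B - A) * v) = 0"
    using bc1(2) unfolding cf_def e1_def e2_def u_def v_def by (simp add: algebra_simps)
  then have E3: "(C + Dd) * e1 + (Dd - C) * e2 + (A + B) * u + (B - A) * v = 0" using kpos by simp
  have "k * ((C + Dd) * e1 + (Dd - C) * e2 - (A + B) * u - (B - A) * v) = 0"
    using bc2(2) unfolding cf_def e1_def e2_def u_def v_def by (simp add: algebra_simps)
  then have E4: "(C + Dd) * e1 + (Dd - C) * e2 - (A + B) * u - (B - A) * v = 0" using kpos by simp
  have i: "A * e1 + B * e2 = 2 * \<alpha>^3" using E1 E2 by linarith
  have ii: "C * u + Dd * v = 0" using E1 E2 by linarith
  have iii: "(C + Dd) * e1 + (Dd - C) * e2 = 0" using E3 E4 by linarith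
  have iv: "(A + B) * u + (B - A) * v = 0" using E3 E4 by linarith
  define W where "W = sinh k * cosh k - sin k * cos k"
  define S where "S = sinh k * cosh k + sin k * cos k"
  have Wp: "W > 0" unfolding W_def using W_pos kpos by simp
  have Sp: "S > 0" unfolding S_def using S_pos kpos by simp
  have pyth: "cosh k * cosh k - sinh k * sinh k = 1" "sin k * sin k + cos k * cos k = 1"
    using hyperbolic_pythagoras[of k] sin_cos_squared_add[of k] unfolding power2_eq_square by auto
  have Wid: "u * (e1 + e2) - v * (e1 - e2) = W"
    unfolding u_def v_def e1_def e2_def W_def using pyth by algebra
  have Sid: "e1 * (u + v) - e2 * (u - v) = S"
    unfolding u_def v_def e1_def e2_def S_def using pyth by algebra
  have "C * W = 0"
  proof -
    have "C * W = (C * u + Dd * v) * (e1 + e2) - ((C + Dd) * e1 + (Dd - C) * e2) * v"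
      unfolding Wid[symmetric] by algebra
    then show ?thesis using ii iii by simp
  qed
  then have C0: "C = 0" using Wp by simp
  have "Dd * W = 0"
  proof -
    have "Dd * W = ((C + Dd) * e1 + (Dd - C) * e2) * u - (C * u + Dd * v) * (e1 - e2)"
      unfolding Wid[symmetric] by algebra
    then show ?thesis using ii iii by simp
  qed
  then have D0: "Dd = 0" using Wp by simp
  have AS: "A * S = 2 * \<alpha>^3 * (u + v)"
  proof -
    have "A * S = (u + v) * (A * e1 + B * e2) - e2 * ((A + B) * u + (B - A) * v)"
      unfolding Sid[symmetric] by algebra
    then show ?thesis using i iv by simp
  qed
  have BS: "B * S = 2 * \<alpha>^3 * (v - u)"
  proof -
    have "B * S = e1 * ((A + B) * u + (B - A) * v) - (u - v) * (A * e1 + B * e2)"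
      unfolding Sid[symmetric] by algebra
    also have "\<dots> = e1 * 0 - (u - v) * (2 * \<alpha>^3)" by (simp only: i iv)
    also have "\<dots> = 2 * \<alpha>^3 * (v - u)" by (simp add: algebra_simps)
    finally show ?thesis .
  qed
  show ?thesis
  proof
    fix x :: real assume x: "x \<in> {0<..<1}"
    then have xI: "x \<in> I" unfolding I_def by auto
    define U where "U = sinh (k*x) * cos (k*x)"
    define V where "V = cosh (k*x) * sin (k*x)"
    have df: "deriv f x = k * ((A + B) * U + (B - A) * V)"
    proof -
      have "f1 x = Lq k (dq k cf) x" using f1eq xI by blast
      then show ?thesis using C0 D0 unfolding f1_def[symmetric] cf_def U_def V_def by (simp add: algebra_simps)
    qed
    have "S * deriv f x = k * ((A * S + B * S) * U + (B * S - A * S) * V)"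
      unfolding df by (simp add: algebra_simps)
    also have "\<dots> = 4 * k * \<alpha>^3 * (v * U - u * V)"
      unfolding AS BS by (simp add: algebra_simps)
    finally have eq: "S * deriv f x = 4 * k * \<alpha>^3 * (v * U - u * V)" .
    have "v * U - u * V > 0"
      using main_sign[of "k*x" k] x kpos kle unfolding u_def v_def U_def V_def
      by (simp add: mult_less_cancel_left1 algebra_simps)
    then have "S * deriv f x > 0" unfolding eq using kpos apos by simp
    then show "deriv f x > 0" using Sp by (simp add: zero_less_mult_iff)
  qed
qed

end
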